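(* Let $n,s\in\mathbb{N}$ and let $p_{X,Y}\in\mathcal{E}[0,1]^2_n$ have weights $w_{k_1,k_2}$ that depend only on $k_2$, i.e. $w_{k_1,k_2}=w_{k_2}$ for all $k_1,k_2\in\{0,\dots,n-1\}$ (where $k_1$ indexes the $x$-coordinate and $k_2$ the $y$-coordinate of the cell). Then there exists a ReLU network $\Phi\in\mathcal{N}_{1,2}$ with connectivity $\mathcal{M}(\Phi)\le 6n+24s+2$ and depth $\mathcal{L}(\Phi)=s+3$ such that \[ W(\Phi\#U,\,p_{X,Y})\le\frac{2\sqrt2}{2^s}. \]
   Context: $\mathcal{E}[0,1]^2_n$: densities $p(x,y)=\sum_{k_1,k_2=0}^{n-1}w_{k_1,k_2}\chi_{[k_1/n,(k_1+1)/n]\times[k_2/n,(k_2+1)/n]}(x,y)$ with all $w_{k_1,k_2}>0$ and $\sum w_{k_1,k_2}=n^2$. A ReLU network of depth $L\ge2$ is $\Phi=W_L\circ\rho\circ W_{L-1}\circ\cdots\circ\rho\circ W_1$ with affine $W_\ell(x)=A_\ell x+b_\ell$ and $\rho(x)=\max(x,0)$ componentwise; $\mathcal{L}(\Phi)=L$; $\mathcal{M}(\Phi)$ is the total number of nonzero entries of all $A_\ell,b_\ell$; $\mathcal{N}_{d,d'}$ is the set of such networks with input dimension $d$, output dimension $d'$. $U$ is uniform on $[0,1]$, $\#$ is push-forward, and $W$ is the 1-Wasserstein distance $W(\mu,\nu)=\inf_\pi\int|x-y|d\pi$ over couplings of $\mu,\nu$ with Euclidean norm. *)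

theory Defs
  imports "HOL-Analysis.Analysis"
begin

(* A layer: (output dim m, input dim d, matrix A (entries A i j, i<m, j<d), bias b (b i, i<m)). *)
type_synonym layer = "nat \<times> nat \<times> (nat \<Rightarrow> nat \<Rightarrow> real) \<times> (nat \<Rightarrow> real)"

definition layer_out :: "layer \<Rightarrow> nat" where "layer_out l = fst l"
definition layer_in :: "layer \<Rightarrow> nat" where "layer_in l = fst (snd l)"
definition layer_mat :: "layer \<Rightarrow> nat \<Rightarrow> nat \<Rightarrow> real" where "layer_mat l = fst (snd (snd l))"
definition layer_bias :: "layer \<Rightarrow> nat \<Rightarrow> real" where "layer_bias l = snd (snd (snd l))"

(* affine map W(x) = A x + b, vectors represented as nat \<Rightarrow> real (only first entries relevant) *)
definition affine_apply :: "layer \<Rightarrow> (nat \<Rightarrow> real) \<Rightarrow> (nat \<Rightarrow> real)" where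
  "affine_apply l x = (\<lambda>i. if i < layer_out l
      then (\<Sum>j<layer_in l. layer_mat l i j * x j) + layer_bias l i else 0)"

definition relu :: "(nat \<Rightarrow> real) \<Rightarrow> (nat \<Rightarrow> real)" where
  "relu x = (\<lambda>i. max (x i) 0)"

(* realization  W_L o rho o W_{L-1} o ... o rho o W_1 ; list is [W_1, ..., W_L] *)
fun realize :: "layer list \<Rightarrow> (nat \<Rightarrow> real) \<Rightarrow> (nat \<Rightarrow> real)" where
  "realize [] x = x"
| "realize [l] x = affine_apply l x"
| "realize (l # ls) x = realize ls (relu (affine_apply l x))"

definition is_relu_net :: "nat \<Rightarrow> nat \<Rightarrow> layer list \<Rightarrow> bool" where
  "is_relu_net d d' ls \<longleftrightarrow> length ls \<ge> 2 \<and> layer_in (hd ls) = d \<and> layer_out (last ls) = d'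
     \<and> (\<forall>i. Suc i < length ls \<longrightarrow> layer_out (ls ! i) = layer_in (ls ! Suc i))"

definition net_depth :: "layer list \<Rightarrow> nat" where
  "net_depth ls = length ls"

definition layer_nnz :: "layer \<Rightarrow> nat" where
  "layer_nnz l = card {(i, j). i < layer_out l \<and> j < layer_in l \<and> layer_mat l i j \<noteq> 0}
               + card {i. i < layer_out l \<and> layer_bias l i \<noteq> 0}"

definition net_connectivity :: "layer list \<Rightarrow> nat" where
  "net_connectivity ls = (\<Sum>l\<leftarrow>ls. layer_nnz l)"

definition net_fun_1_2 :: "layer list \<Rightarrow> real \<Rightarrow> real \<times> real" where
  "net_fun_1_2 ls t = (let y = realize ls (\<lambda>i. if i = 0 then t else 0) in (y 0, y 1))"

definition unif01 :: "real measure" where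
  "unif01 = uniform_measure lborel {0..1}"

definition pushforward :: "('a \<Rightarrow> 'b::topological_space) \<Rightarrow> 'a measure \<Rightarrow> 'b measure" where
  "pushforward f \<mu> = distr \<mu> borel f"

definition couplings :: "'a::topological_space measure \<Rightarrow> 'a measure \<Rightarrow> ('a \<times> 'a) measure set" where
  "couplings \<mu> \<nu> = {\<pi>. sets \<pi> = sets (borel \<Otimes>\<^sub>M borel) \<and>
       distr \<pi> borel fst = \<mu> \<and> distr \<pi> borel snd = \<nu>}"

(* 1-Wasserstein distance (Euclidean norm on R^2 = real \<times> real) *)
definition wasserstein1 :: "'a::metric_space measure \<Rightarrow> 'a measure \<Rightarrow> ennreal" where
  "wasserstein1 \<mu> \<nu> = (INF \<pi>\<in>couplings \<mu> \<nu>. \<integral>\<^sup>+ z. ennreal (dist (fst z) (snd z)) \<partial>\<pi>)"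

definition pw_density :: "nat \<Rightarrow> (nat \<Rightarrow> nat \<Rightarrow> real) \<Rightarrow> real \<times> real \<Rightarrow> real" where
  "pw_density n w = (\<lambda>(x, y). \<Sum>k1<n. \<Sum>k2<n. w k1 k2 *
      indicator ({real k1 / n .. (real k1 + 1) / n} \<times> {real k2 / n .. (real k2 + 1) / n}) (x, y))"

definition E2_weights :: "nat \<Rightarrow> (nat \<Rightarrow> nat \<Rightarrow> real) \<Rightarrow> bool" where
  "E2_weights n w \<longleftrightarrow> (\<forall>k1<n. \<forall>k2<n. w k1 k2 > 0) \<and> (\<Sum>k1<n. \<Sum>k2<n. w k1 k2) = real n ^ 2"

definition density_measure :: "(real \<times> real \<Rightarrow> real) \<Rightarrow> (real \<times> real) measure" where
  "density_measure p = density lborel (\<lambda>z. ennreal (p z))"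

end

theory Submission
  imports Defs
begin
definition tent :: "real \<Rightarrow> real" where
  "tent x = 2 * max x 0 - 4 * max (x - 1/2) 0"

lemma tent_lo: "0 \<le> x \<Longrightarrow> x \<le> 1/2 \<Longrightarrow> tent x = 2 * x"
  by (simp add: tent_def)
lemma tent_hi: "1/2 \<le> x \<Longrightarrow> tent x = 2 - 2 * x"
  by (simp add: tent_def)

definition zz :: "nat \<Rightarrow> real \<Rightarrow> real" where
  "zz j a = (if even j then a else 1 - a)"

lemma tent_iter:
  assumes "j < 2^m" "0 \<le> a" "a \<le> 1"
  shows "(tent ^^ m) ((real j + zz j a) / 2^m) = a"
  using assms
proof (induction m arbitrary: j)
  case 0
  then show ?case by (simp add: zz_def)
next
  case (Suc m)
  have z01: "0 \<le> zz j a" "zz j a \<le> 1" using Suc.prems by (auto simp: zz_def)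
  show ?case
  proof (cases "j < 2^m")
    case True
    have "j + 1 \<le> 2^m" using True by simp
    then have "real (j + 1) \<le> real (2^m)" by (simp only: of_nat_le_iff)
    then have "real j + 1 \<le> 2^m" by simp
    then have le: "(real j + zz j a) / 2 ^ Suc m \<le> 1/2" using z01 by (simp add: field_simps)
    have ge: "0 \<le> (real j + zz j a) / 2 ^ Suc m" using z01 by simp
    have "tent ((real j + zz j a) / 2 ^ Suc m) = (real j + zz j a) / 2 ^ m"
      using tent_lo[OF ge le] by (simp add: field_simps)
    then show ?thesis using Suc.IH[OF True Suc.prems(2,3)] by (simp add: funpow_Suc_right del: funpow.simps)
  next
    case False
    define j' where "j' = 2^Suc m - 1 - j"
    have jj: "j' < 2^m" "real j' = 2^Suc m - 1 - real j" using False Suc.prems(1)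
      by (auto simp: j'_def of_nat_diff)
    have par: "even j' \<longleftrightarrow> odd j"
    proof -
      have "j' + j + 1 = 2^Suc m" using False Suc.prems(1) by (simp add: j'_def)
      then have "even (j' + j + 1)" by simp
      then show ?thesis by auto
    qed
    have zeq: "real j' + zz j' a = 2^Suc m - real j - zz j a"
      using par jj by (auto simp: zz_def)
    have "2^m \<le> j" using False by simp
    then have "real (2^m) \<le> real j" by (simp only: of_nat_le_iff)
    then have r: "(2::real)^m \<le> real j" by simp
    have "(2::real)^Suc m \<le> 2 * (real j + zz j a)" using z01 r by (simp only: power_Suc) (smt (verit))
    then have ge: "1/2 \<le> (real j + zz j a) / 2 ^ Suc m" by (simp add: field_simps)
    have "tent ((real j + zz j a) / 2 ^ Suc m) = (real j' + zz j' a) / 2 ^ m"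
      using tent_hi[OF ge] zeq by (simp add: field_simps)
    then show ?thesis using Suc.IH[OF jj(1) Suc.prems(2,3)] by (simp add: funpow_Suc_right del: funpow.simps)
  qed
qed

lemma realize_cons: "ls \<noteq> [] \<Longrightarrow> realize (l # ls) x = realize ls (relu (affine_apply l x))"
  by (cases ls) auto

definition Lmid :: layer where
  "Lmid = (3, 3, \<lambda>i j. if i \<le> 1 then (if j = 0 then 2 else if j = 1 then -4 else 0)
                       else if i = 2 \<and> j = 2 then 1 else 0, \<lambda>i. if i = 1 then -1/2 else 0)"

definition Lfin :: layer where
  "Lfin = (2, 3, \<lambda>i j. if i = 0 then (if j = 0 then 2 else if j = 1 then -4 else 0)
                       else if i = 1 \<and> j = 2 then 1 else 0, \<lambda>i. 0)"

lemma sum3: "(\<Sum>j<(3::nat). f j) = f 0 + f 1 + (f 2::real)"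
  by (simp add: eval_nat_numeral)

lemma mid_lemma:
  assumes "x 0 = max y 0" "x 1 = max (y - 1/2) 0" "x 2 = g" "0 \<le> g"
  shows "realize (replicate k Lmid @ [Lfin]) x 0 = (tent ^^ Suc k) y
       \<and> realize (replicate k Lmid @ [Lfin]) x 1 = g"
  using assms
proof (induction k arbitrary: x y)
  case 0
  then show ?case
    by (simp add: Lfin_def affine_apply_def layer_out_def layer_in_def layer_mat_def
        layer_bias_def sum3 tent_def)
next
  case (Suc k)
  let ?x' = "relu (affine_apply Lmid x)"
  have "?x' 0 = max (tent y) 0" "?x' 1 = max (tent y - 1/2) 0" "?x' 2 = g"
    using Suc.prems by (simp_all add: Lmid_def affine_apply_def layer_out_def layer_in_def layer_mat_def
        layer_bias_def sum3 tent_def relu_def)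
  from Suc.IH[OF this Suc.prems(4)]
  show ?case by (simp add: realize_cons funpow_Suc_right del: funpow.simps)
qed

definition L1 :: "nat \<Rightarrow> (nat \<Rightarrow> real) \<Rightarrow> layer" where
  "L1 n c = (2*n+2, 1, \<lambda>i j. 1, \<lambda>i. if i = 2*n then 0 else if i = 2*n+1 then -1/2
      else if even i then - c (i div 2) else - c (i div 2 + 1))"

definition L2 :: "nat \<Rightarrow> (nat \<Rightarrow> real) \<Rightarrow> layer" where
  "L2 n v = (3, 2*n+2, \<lambda>i j. if i \<le> 1 then (if j = 2*n then 2 else if j = 2*n+1 then -4 else 0)
      else if i = 2 \<and> j < 2*n then (if even j then 1 / v (j div 2) else - (1 / v (j div 2))) else 0,
      \<lambda>i. if i = 1 then -1/2 else 0)"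

definition Gf :: "nat \<Rightarrow> (nat \<Rightarrow> real) \<Rightarrow> (nat \<Rightarrow> real) \<Rightarrow> real \<Rightarrow> real" where
  "Gf n v c t = (\<Sum>k<n. (max (t - c k) 0 - max (t - c (Suc k)) 0) / v k)"

definition Net :: "nat \<Rightarrow> nat \<Rightarrow> (nat \<Rightarrow> real) \<Rightarrow> (nat \<Rightarrow> real) \<Rightarrow> layer list" where
  "Net n s v c = L1 n c # L2 n v # replicate s Lmid @ [Lfin]"

lemma sum_double: "(\<Sum>j<2*(N::nat). f j) = (\<Sum>k<N. f (2*k) + f (2*k+1) :: real)"
  by (induction N) (simp_all add: add.assoc)

lemma sum_two:
  assumes "a < (N::nat)" "b < N" "a \<noteq> b"
  shows "(\<Sum>j<N. (if j = a then p else if j = b then q else 0) * f j) = p * f a + q * (f b :: real)"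
proof -
  have "(\<Sum>j<N. (if j = a then p else if j = b then q else 0) * f j)
      = (\<Sum>j<N. (if j = a then p * f j else 0)) + (\<Sum>j<N. (if j = b then q * f j else 0))"
    unfolding sum.distrib[symmetric] by (rule sum.cong) (use assms in auto)
  also have "\<dots> = p * f a + q * f b" using assms by (simp add: sum.delta sum.delta')
  finally show ?thesis .
qed

lemma Gf_nonneg:
  assumes "\<And>k. c k \<le> c (Suc k)" "\<And>k. 0 < v k"
  shows "0 \<le> Gf n v c t"
proof -
  have "max (t - c (Suc k)) 0 \<le> max (t - c k) 0" for k using assms(1)[of k] by (simp add: max_def)
  then show ?thesis unfolding Gf_def using assms(2) by (intro sum_nonneg divide_nonneg_pos) auto
qed

lemma net_fun:
  assumes "\<And>k. c k \<le> c (Suc k)" "\<And>k. 0 < v k"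
  shows "net_fun_1_2 (Net n s v c) t = ((tent ^^ (s+2)) t, Gf n v c t)"
proof -
  let ?x0 = "\<lambda>i::nat. if i = 0 then t else 0"
  let ?x1 = "relu (affine_apply (L1 n c) ?x0)"
  have x1: "i < 2*n+2 \<Longrightarrow> ?x1 i = max (t + (if i = 2*n then 0 else if i = 2*n+1 then -1/2
      else if even i then - c (i div 2) else - c (i div 2 + 1))) 0" for i
    by (simp add: L1_def affine_apply_def layer_out_def layer_in_def layer_mat_def
        layer_bias_def relu_def)
  let ?x2 = "relu (affine_apply (L2 n v) ?x1)"
  have r01: "(\<Sum>j<2*n+2. (if j = 2*n then 2 else if j = 2*n+1 then -4 else 0) * ?x1 j) = tent t"
    by (subst sum_two) (simp_all add: x1 tent_def)
  have r2: "(\<Sum>j<2*n+2. (if j < 2*n then (if even j then 1 / v (j div 2) else - (1 / v (j div 2))) else 0) * ?x1 j)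
        = Gf n v c t"
  proof -
    have "(\<Sum>j<2*n+2. (if j < 2*n then (if even j then 1 / v (j div 2) else - (1 / v (j div 2))) else 0) * ?x1 j)
        = (\<Sum>j<2*n. (if j < 2*n then (if even j then 1 / v (j div 2) else - (1 / v (j div 2))) else 0) * ?x1 j)"
      by simp
    also have "\<dots> = (\<Sum>k<n. (1 / v k) * max (t - c k) 0 - (1 / v k) * max (t - c (Suc k)) 0)"
      unfolding sum_double by (rule sum.cong) (simp_all add: x1)
    also have "\<dots> = Gf n v c t" unfolding Gf_def by (rule sum.cong) (simp_all add: diff_divide_distrib)
    finally show ?thesis .
  qed
  have x2: "?x2 0 = max (tent t) 0" "?x2 1 = max (tent t - 1/2) 0" "?x2 2 = Gf n v c t"
    using r01 r2 Gf_nonneg[where c=c and v=v, OF assms, of n t]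
    by (simp_all add: L2_def affine_apply_def layer_out_def layer_in_def layer_mat_def
        layer_bias_def relu_def)
  have "realize (Net n s v c) ?x0 = realize (replicate s Lmid @ [Lfin]) ?x2"
    by (simp add: Net_def realize_cons)
  with mid_lemma[OF x2 Gf_nonneg[where c=c and v=v, OF assms], of s]
  show ?thesis by (simp add: net_fun_1_2_def funpow_Suc_right del: funpow.simps)
qed

lemma nnz_L1: "layer_nnz (L1 n c) \<le> 4*n+4"
proof -
  have a: "{(i, j). i < layer_out (L1 n c) \<and> j < layer_in (L1 n c) \<and> layer_mat (L1 n c) i j \<noteq> 0}
      \<subseteq> {..<2*n+2} \<times> {..<1}" by (auto simp: L1_def layer_out_def layer_in_def)
  have b: "{i. i < layer_out (L1 n c) \<and> layer_bias (L1 n c) i \<noteq> 0} \<subseteq> {..<2*n+2}"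
    by (auto simp: L1_def layer_out_def)
  have "card {(i, j). i < layer_out (L1 n c) \<and> j < layer_in (L1 n c) \<and> layer_mat (L1 n c) i j \<noteq> 0} \<le> 2*n+2"
    using card_mono[OF _ a] by (simp add: card_cartesian_product)
  moreover have "card {i. i < layer_out (L1 n c) \<and> layer_bias (L1 n c) i \<noteq> 0} \<le> 2*n+2"
    using card_mono[OF _ b] by simp
  ultimately show ?thesis unfolding layer_nnz_def by linarith
qed

lemma nnz_L2: "layer_nnz (L2 n v) \<le> 2*n+5"
proof -
  have a: "{(i, j). i < layer_out (L2 n v) \<and> j < layer_in (L2 n v) \<and> layer_mat (L2 n v) i j \<noteq> 0}
      \<subseteq> ({0,1} \<times> {2*n, 2*n+1}) \<union> ({2} \<times> {..<2*n})"
    by (auto simp: L2_def layer_out_def layer_in_def layer_mat_def split: if_splits)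
  have b: "{i. i < layer_out (L2 n v) \<and> layer_bias (L2 n v) i \<noteq> 0} \<subseteq> {1}"
    by (auto simp: L2_def layer_out_def layer_bias_def split: if_splits)
  have "card (({0,1::nat} \<times> {2*n, 2*n+1}) \<union> ({2::nat} \<times> {..<2*n})) \<le> card ({0,1::nat} \<times> {2*n, 2*n+1}) + card ({2::nat} \<times> {..<2*n})"
    by (rule card_Un_le)
  also have "\<dots> \<le> 4 + 2*n" by (simp add: card_cartesian_product)
  moreover have "card {(i, j). i < layer_out (L2 n v) \<and> j < layer_in (L2 n v) \<and> layer_mat (L2 n v) i j \<noteq> 0} \<le> card (({0,1::nat} \<times> {2*n, 2*n+1}) \<union> ({2::nat} \<times> {..<2*n}))"
    by (rule card_mono[OF _ a]) simp
  ultimately have "card {(i, j). i < layer_out (L2 n v) \<and> j < layer_in (L2 n v) \<and> layer_mat (L2 n v) i j \<noteq> 0} \<le> 4 + 2*n"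
    by linarith
  moreover have "card {i. i < layer_out (L2 n v) \<and> layer_bias (L2 n v) i \<noteq> 0} \<le> 1"
    using card_mono[OF _ b] by simp
  ultimately show ?thesis unfolding layer_nnz_def by linarith
qed

lemma nnz_Lmid: "layer_nnz Lmid \<le> 6"
proof -
  have a: "{(i, j). i < layer_out Lmid \<and> j < layer_in Lmid \<and> layer_mat Lmid i j \<noteq> 0}
      \<subseteq> {(0,0),(0,1),(1,0),(1,1),(2,2)}"
    by (auto simp: Lmid_def layer_out_def layer_in_def layer_mat_def split: if_splits)
  have b: "{i. i < layer_out Lmid \<and> layer_bias Lmid i \<noteq> 0} \<subseteq> {1}"
    by (auto simp: Lmid_def layer_out_def layer_bias_def split: if_splits)
  have "card {(i, j). i < layer_out Lmid \<and> j < layer_in Lmid \<and> layer_mat Lmid i j \<noteq> 0} \<le> 5"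
  proof -
    have "card {(i, j). i < layer_out Lmid \<and> j < layer_in Lmid \<and> layer_mat Lmid i j \<noteq> 0} \<le> card {(0::nat,0::nat),(0,1),(1,0),(1,1),(2,2)}"
      by (rule card_mono[OF _ a]) simp
    also have "\<dots> = 5" by simp
    finally show ?thesis .
  qed
  moreover have "card {i. i < layer_out Lmid \<and> layer_bias Lmid i \<noteq> 0} \<le> 1"
    using card_mono[OF _ b] by simp
  ultimately show ?thesis unfolding layer_nnz_def by linarith
qed

lemma nnz_Lfin: "layer_nnz Lfin \<le> 3"
proof -
  have a: "{(i, j). i < layer_out Lfin \<and> j < layer_in Lfin \<and> layer_mat Lfin i j \<noteq> 0}
      \<subseteq> {(0,0),(0,1),(1,2)}"
    by (auto simp: Lfin_def layer_out_def layer_in_def layer_mat_def split: if_splits)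
  have b: "{i. i < layer_out Lfin \<and> layer_bias Lfin i \<noteq> 0} = {}"
    by (auto simp: Lfin_def layer_out_def layer_bias_def)
  have "card {(i, j). i < layer_out Lfin \<and> j < layer_in Lfin \<and> layer_mat Lfin i j \<noteq> 0} \<le> 3"
  proof -
    have "card {(i, j). i < layer_out Lfin \<and> j < layer_in Lfin \<and> layer_mat Lfin i j \<noteq> 0} \<le> card {(0::nat,0::nat),(0,1),(1,2)}"
      by (rule card_mono[OF _ a]) simp
    also have "\<dots> = 3" by simp
    finally show ?thesis .
  qed
  then show ?thesis unfolding layer_nnz_def b by simp
qed

lemma Net_conn: "1 \<le> s \<Longrightarrow> net_connectivity (Net n s v c) \<le> 6 * n + 24 * s + 2"
proof -
  have "net_connectivity (Net n s v c) = layer_nnz (L1 n c) + layer_nnz (L2 n v) + s * layer_nnz Lmid + layer_nnz Lfin"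
    by (simp add: net_connectivity_def Net_def sum_list_replicate)
  moreover have "s * layer_nnz Lmid \<le> s * 6" using nnz_Lmid by simp
  moreover assume "1 \<le> s"
  ultimately show ?thesis using nnz_L1[of n c] nnz_L2[of n v] nnz_Lfin by linarith
qed

lemma Net_depth: "net_depth (Net n s v c) = s + 3"
  by (simp add: net_depth_def Net_def)

lemma Net_relu: "is_relu_net 1 2 (Net n s v c)"
  unfolding is_relu_net_def
proof (intro conjI allI impI)
  show "2 \<le> length (Net n s v c)" by (simp add: Net_def)
  show "layer_in (hd (Net n s v c)) = 1" by (simp add: Net_def L1_def layer_in_def)
  show "layer_out (last (Net n s v c)) = 2" by (simp add: Net_def Lfin_def layer_out_def)
  fix i assume i: "Suc i < length (Net n s v c)"
  show "layer_out (Net n s v c ! i) = layer_in (Net n s v c ! Suc i)"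
  proof (cases i)
    case 0 then show ?thesis by (simp add: Net_def L1_def L2_def layer_out_def layer_in_def)
  next
    case (Suc i')
    have in3: "layer_in ((replicate s Lmid @ [Lfin]) ! k) = 3" if "k < s + 1" for k
      using that by (cases "k < s") (auto simp: nth_append Lmid_def Lfin_def layer_in_def)
    have out3: "layer_out ((L2 n v # replicate s Lmid) ! k) = 3" if "k < s + 1" for k
      using that by (cases k) (auto simp: L2_def Lmid_def layer_out_def)
    have "Net n s v c ! i = (L2 n v # replicate s Lmid) ! i'"
      using i Suc by (cases i') (auto simp: Net_def nth_append)
    moreover have "Net n s v c ! Suc i = (replicate s Lmid @ [Lfin]) ! i'"
      using Suc by (simp add: Net_def)
    ultimately show ?thesis using in3 out3 i Suc by (simp add: Net_def)
  qed
qed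

locale gsetup =
  fixes n :: nat and v c :: "nat \<Rightarrow> real"
  assumes n1: "1 \<le> n" and vpos: "\<And>k. 0 < v k" and csuc: "\<And>k. c (Suc k) = c k + v k / n"
    and c0: "c 0 = 0"
begin

lemma cle: "c k \<le> c (Suc k)" using csuc[of k] vpos[of k] n1 by simp

lemma cmono: "k \<le> k' \<Longrightarrow> c k \<le> c k'"
  using lift_Suc_mono_le[of c, OF cle] by blast

lemma G_piece:
  assumes j: "j < n" and t: "c j \<le> t" "t \<le> c (Suc j)"
  shows "Gf n v c t = real j / n + (t - c j) / v j"
proof -
  let ?f = "\<lambda>k. (max (t - c k) 0 - max (t - c (Suc k)) 0) / v k"
  have lo: "?f k = 1 / n" if "k < j" for k
  proof -
    have "c (Suc k) \<le> t" using cmono[of "Suc k" j] that t by simp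
    moreover have "c k \<le> c (Suc k)" by (rule cle)
    ultimately have "?f k = (c (Suc k) - c k) / v k" by simp
    also have "\<dots> = 1 / n" using csuc[of k] vpos[of k] n1 by (simp add: field_simps)
    finally show ?thesis .
  qed
  have hi: "?f k = 0" if "Suc j \<le> k" for k
  proof -
    have "t \<le> c k" using cmono[OF that] t by simp
    moreover have "c k \<le> c (Suc k)" by (rule cle)
    ultimately show ?thesis by simp
  qed
  have mid: "?f j = (t - c j) / v j" using t by simp
  have "sum ?f {0..<Suc j} + sum ?f {Suc j..<n} = sum ?f {0..<n}"
    by (rule sum.atLeastLessThan_concat) (use j in auto)
  then have "Gf n v c t = sum ?f {..<j} + ?f j + sum ?f {Suc j..<n}"
    unfolding Gf_def atLeast0LessThan by simp
  also have "sum ?f {..<j} = real j / n" using lo by simp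
  also have "sum ?f {Suc j..<n} = 0" using hi by (intro sum.neutral) auto
  finally show ?thesis using mid by simp
qed

lemma G_mono: "t \<le> t' \<Longrightarrow> Gf n v c t \<le> Gf n v c t'"
  unfolding Gf_def
proof (rule sum_mono)
  fix k assume "t \<le> t'"
  have "max (t - c k) 0 - max (t - c (Suc k)) 0 \<le> max (t' - c k) 0 - max (t' - c (Suc k)) 0"
    using cle[of k] \<open>t \<le> t'\<close> by (simp add: max_def)
  then show "(max (t - c k) 0 - max (t - c (Suc k)) 0) / v k \<le> (max (t' - c k) 0 - max (t' - c (Suc k)) 0) / v k"
    using vpos[of k] by (simp add: divide_right_mono)
qed

lemma G0: "Gf n v c 0 = 0"
proof -
  have "c k \<ge> 0" for k using cmono[of 0 k] c0 by simp
  then show ?thesis unfolding Gf_def by (intro sum.neutral) (auto simp: max_def)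
qed

lemma G1: assumes "c n = 1" shows "Gf n v c 1 = 1"
proof -
  obtain m where m: "n = Suc m" using n1 by (cases n) auto
  have "Gf n v c 1 = real m / n + (1 - c m) / v m"
    using G_piece[of m 1] m assms cle[of m] by simp
  also have "1 - c m = v m / n" using csuc[of m] assms m by simp
  also have "v m / n / v m = 1 / n" using vpos[of m] by simp
  also have "real m / n + 1 / n = 1" using m by (simp add: field_simps)
  finally show ?thesis .
qed

end

lemma U_eq: "unif01 = uniform_measure lborel {0..<1}"
proof -
  have "AE x in lborel. indicator {0..1::real} x / emeasure lborel {0..1::real}
        = (indicator {0..<1} x / emeasure lborel {0..<1::real} :: ennreal)"
    using AE_lborel_singleton[of "1::real"] by eventually_elim (auto simp: indicator_def)
  then show ?thesis unfolding unif01_def uniform_measure_def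
    by (intro density_cong) auto
qed

lemma sets_U[simp]: "sets unif01 = sets borel" and space_U[simp]: "space unif01 = UNIV"
  by (auto simp: unif01_def)

lemma meas_U: "f \<in> measurable borel N \<Longrightarrow> f \<in> measurable unif01 N"
  by (subst measurable_cong_sets[OF sets_U refl])

lemma U_emeasure: "A \<in> sets borel \<Longrightarrow> emeasure unif01 A = emeasure lborel (A \<inter> {0..1})"
  unfolding unif01_def by (subst emeasure_uniform_measure) (auto simp: Int_commute divide_ennreal_def)

lemma U_finite: "finite_measure unif01"
  by (rule finite_measureI) (simp add: U_emeasure)

lemma U_sf: "sigma_finite_measure unif01"
proof -
  interpret finite_measure unif01 by (rule U_finite)
  show ?thesis by unfold_locales
qed

lemma U_nn: "f \<in> borel_measurable borel \<Longrightarrow>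
    (\<integral>\<^sup>+x. f x \<partial>unif01) = (\<integral>\<^sup>+x. f x * indicator {0..<1} x \<partial>lborel)"
  unfolding U_eq by (subst nn_integral_uniform_measure) (auto simp: divide_ennreal_def)

lemma L_aff:
  fixes d \<alpha> :: real
  assumes d: "d \<noteq> 0" and B: "B \<in> sets borel"
  shows "emeasure lborel {x. \<alpha> + d * x \<in> B} = ennreal (1 / \<bar>d\<bar>) * emeasure lborel B"
proof -
  have "emeasure lborel B = emeasure (density (distr lborel borel (\<lambda>x. \<alpha> + d * x)) (\<lambda>_. ennreal \<bar>d\<bar>)) B"
    using lborel_real_affine[OF d, of \<alpha>] by (rule arg_cong[where f="\<lambda>M. emeasure M B"])
  also have "\<dots> = ennreal \<bar>d\<bar> * emeasure lborel {x. \<alpha> + d * x \<in> B}"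
    using B by (simp add: emeasure_density nn_integral_cmult_indicator emeasure_distr vimage_def)
  finally have "ennreal (1 / \<bar>d\<bar>) * emeasure lborel B = ennreal (1 / \<bar>d\<bar>) * ennreal \<bar>d\<bar> * emeasure lborel {x. \<alpha> + d * x \<in> B}"
    by (simp add: mult.assoc)
  also have "ennreal (1 / \<bar>d\<bar>) * ennreal \<bar>d\<bar> = 1" using d by (simp add: ennreal_mult[symmetric])
  finally show ?thesis by simp
qed

lemma L_part:
  fixes c :: "nat \<Rightarrow> real"
  assumes mono: "\<And>k. c k \<le> c (Suc k)" and A: "A \<in> sets borel"
  shows "(\<Sum>k<m. emeasure lborel (A \<inter> {c k..c (Suc k)})) = emeasure lborel (A \<inter> {c 0..c m})"
proof (induction m)
  case 0
  have "emeasure lborel (A \<inter> {c 0..c 0}) \<le> emeasure lborel {c 0..c 0}"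
    by (intro emeasure_mono) auto
  then show ?case by simp
next
  case (Suc m)
  have c0m: "c 0 \<le> c m" using lift_Suc_mono_le[of c, OF mono, of 0 m] by simp
  have "A \<inter> {c 0..c (Suc m)} = (A \<inter> {c 0..c m}) \<union> (A \<inter> {c m<..c (Suc m)})"
    using c0m mono[of m] by auto
  then have "emeasure lborel (A \<inter> {c 0..c (Suc m)}) = emeasure lborel (A \<inter> {c 0..c m}) + emeasure lborel (A \<inter> {c m<..c (Suc m)})"
    using A by (simp add: plus_emeasure disjoint_iff)
  moreover have "emeasure lborel (A \<inter> {c m<..c (Suc m)}) = emeasure lborel (A \<inter> {c m..c (Suc m)})"
  proof -
    have "A \<inter> {c m<..c (Suc m)} = (A \<inter> {c m..c (Suc m)}) - {c m}" by auto
    then show ?thesis using A by (simp add: emeasure_Diff_null_set finite_imp_null_set_lborel)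
  qed
  ultimately show ?case using Suc.IH by simp
qed

lemma Gf_meas[measurable]: "Gf n v c \<in> borel_measurable borel"
  unfolding Gf_def by measurable

context gsetup begin

lemma G_distr:
  assumes cn: "c n = 1" and B: "B \<in> sets borel"
  shows "emeasure (distr unif01 borel (Gf n v c)) B
       = (\<Sum>k<n. ennreal (v k) * emeasure lborel (B \<inter> {real k / n..(real k + 1) / n}))"
proof -
  let ?G = "Gf n v c"
  have GB: "?G -` B \<in> sets borel" using measurable_sets_borel[OF Gf_meas B] by simp
  have "emeasure (distr unif01 borel ?G) B = emeasure lborel (?G -` B \<inter> {c 0..c n})"
    using B GB by (simp add: emeasure_distr U_emeasure c0 cn meas_U[OF Gf_meas])
  also have "\<dots> = (\<Sum>k<n. emeasure lborel (?G -` B \<inter> {c k..c (Suc k)}))"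
    by (rule L_part[where c=c, symmetric, OF cle GB])
  also have "\<dots> = (\<Sum>k<n. ennreal (v k) * emeasure lborel (B \<inter> {real k / n..(real k + 1) / n}))"
  proof (rule sum.cong)
    fix k assume k: "k \<in> {..<n}"
    define d where "d = 1 / v k"
    define \<alpha> where "\<alpha> = real k / n - c k / v k"
    have vk: "0 < v k" by (rule vpos)
    have np: "0 < real n" using n1 by simp
    have eq: "?G -` B \<inter> {c k..c (Suc k)} = {x. \<alpha> + d * x \<in> B \<inter> {real k / n..(real k + 1) / n}}"
    proof (intro set_eqI iffI)
      fix x assume x: "x \<in> ?G -` B \<inter> {c k..c (Suc k)}"
      then have Gx: "?G x = real k / n + (x - c k) / v k" using G_piece[of k x] k by auto
      have "\<alpha> + d * x = real k / n + (x - c k) / v k"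
        unfolding \<alpha>_def d_def using vk by (simp add: field_simps)
      moreover have "0 \<le> (x - c k) / v k" using x vk by auto
      moreover have "(x - c k) / v k \<le> 1 / n"
        using x csuc[of k] vk np by (auto simp: field_simps)
      ultimately show "x \<in> {x. \<alpha> + d * x \<in> B \<inter> {real k / n..(real k + 1) / n}}"
        using x Gx by (auto simp: add_divide_distrib)
    next
      fix x assume x: "x \<in> {x. \<alpha> + d * x \<in> B \<inter> {real k / n..(real k + 1) / n}}"
      have e: "\<alpha> + d * x = real k / n + (x - c k) / v k"
        unfolding \<alpha>_def d_def using vk by (simp add: field_simps)
      have i1: "real k / n \<le> \<alpha> + d * x" "\<alpha> + d * x \<le> (real k + 1) / n" using x by auto
      have "(real k + 1) / n = real k / n + 1 / n" by (simp add: add_divide_distrib)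
      then have "0 \<le> (x - c k) / v k" "(x - c k) / v k \<le> 1 / n"
        using i1 unfolding e by linarith+
      then have xr1: "c k \<le> x" and "x - c k \<le> 1 / n * v k" using vk
        by (auto simp: zero_le_divide_iff pos_divide_le_eq)
      then have xr: "c k \<le> x" "x \<le> c (Suc k)" using csuc[of k] by auto
      then have "?G x = \<alpha> + d * x" using G_piece[of k x] k e by auto
      then show "x \<in> ?G -` B \<inter> {c k..c (Suc k)}" using x xr by auto
    qed
    have "emeasure lborel (?G -` B \<inter> {c k..c (Suc k)}) = ennreal (1 / \<bar>d\<bar>) * emeasure lborel (B \<inter> {real k / n..(real k + 1) / n})"
      unfolding eq using vk B by (intro L_aff) (auto simp: d_def)
    also have "1 / \<bar>d\<bar> = v k" using vk by (simp add: d_def)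
    finally show "emeasure lborel (?G -` B \<inter> {c k..c (Suc k)}) = ennreal (v k) * emeasure lborel (B \<inter> {real k / n..(real k + 1) / n})" .
  qed simp
  finally show ?thesis .
qed

end

lemma lborel2_Times:
  fixes S T :: "real set"
  assumes "S \<in> sets borel" "T \<in> sets borel"
  shows "emeasure (lborel :: (real \<times> real) measure) (S \<times> T) = emeasure lborel S * emeasure lborel T"
proof -
  have "emeasure (lborel :: (real \<times> real) measure) (S \<times> T) = emeasure (lborel \<Otimes>\<^sub>M lborel) (S \<times> T)"
    by (simp only: lborel_prod)
  also have "\<dots> = emeasure lborel S * emeasure lborel T"
    using assms by (intro lborel.emeasure_pair_measure_Times) auto
  finally show ?thesis .
qed

lemma Times_borel: "(A::real set) \<in> sets borel \<Longrightarrow> (B::real set) \<in> sets borel \<Longrightarrow> A \<times> B \<in> sets (borel :: (real \<times> real) measure)"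
proof -
  assume "A \<in> sets borel" "B \<in> sets borel"
  then have "A \<times> B \<in> sets (borel \<Otimes>\<^sub>M borel)" by (rule pair_measureI)
  then show ?thesis by (simp only: borel_prod)
qed

lemma pw_meas: "pw_density n w \<in> borel_measurable borel"
proof -
  have e: "pw_density n w = (\<lambda>z. \<Sum>k1<n. \<Sum>k2<n. w k1 k2 *
      indicator ({real k1 / n .. (real k1 + 1) / n} \<times> {real k2 / n .. (real k2 + 1) / n}) z)"
    by (auto simp: pw_density_def fun_eq_iff)
  show ?thesis unfolding e
    by (intro borel_measurable_sum borel_measurable_times borel_measurable_const borel_measurable_indicator Times_borel) auto
qed

lemma grid_part:
  assumes n: "1 \<le> n" and A: "A \<in> sets borel"
  shows "(\<Sum>k<n. emeasure lborel (A \<inter> {real k / n..(real k + 1) / n})) = emeasure lborel (A \<inter> {0..1})"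
proof -
  have "(\<Sum>k<n. emeasure lborel (A \<inter> {(\<lambda>k. real k / n) k..(\<lambda>k. real k / n) (Suc k)}))
      = emeasure lborel (A \<inter> {(\<lambda>k. real k / n) 0..(\<lambda>k. real k / n) n})"
    by (rule L_part[OF _ A]) (simp add: divide_right_mono)
  then show ?thesis using n by (simp add: add.commute)
qed

lemma mu_rect:
  fixes n :: nat and w :: "nat \<Rightarrow> nat \<Rightarrow> real" and v :: "nat \<Rightarrow> real"
  assumes n: "1 \<le> n" and vpos: "\<And>k. 0 < v k" and wv: "\<And>k1 k2. k1 < n \<Longrightarrow> k2 < n \<Longrightarrow> w k1 k2 = v k2"
    and A: "A \<in> sets borel" and B: "B \<in> sets borel"
  shows "emeasure (density_measure (pw_density n w)) (A \<times> B)
       = emeasure lborel (A \<inter> {0..1}) * (\<Sum>k<n. ennreal (v k) * emeasure lborel (B \<inter> {real k / n..(real k + 1) / n}))"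
proof -
  define X where "X k = {real k / n..(real k + 1) / n}" for k :: nat
  have Xb[measurable]: "X k \<in> sets borel" for k by (simp add: X_def)
  have AB: "A \<times> B \<in> sets (lborel :: (real \<times> real) measure)" using Times_borel[OF A B] by simp
  have pw: "ennreal (pw_density n w z) * indicator (A \<times> B) z
      = (\<Sum>k1<n. \<Sum>k2<n. ennreal (v k2) * indicator ((A \<inter> X k1) \<times> (B \<inter> X k2)) z)" for z
  proof -
    obtain x y where z: "z = (x, y)" by (cases z)
    have "(\<Sum>k1<n. \<Sum>k2<n. ennreal (v k2 * indicator (X k1 \<times> X k2) z)) = ennreal (pw_density n w z)"
      unfolding z pw_density_def X_def
      by (simp add: wv vpos less_imp_le sum_nonneg)
    then have "ennreal (pw_density n w z) = (\<Sum>k1<n. \<Sum>k2<n. ennreal (v k2 * indicator (X k1 \<times> X k2) z))" ..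
    also have "\<dots> * indicator (A \<times> B) z = (\<Sum>k1<n. \<Sum>k2<n. ennreal (v k2) * indicator ((A \<inter> X k1) \<times> (B \<inter> X k2)) z)"
      unfolding sum_distrib_right by (intro sum.cong refl) (auto simp: z indicator_def)
    finally show ?thesis by simp
  qed
  have "emeasure (density_measure (pw_density n w)) (A \<times> B)
      = (\<integral>\<^sup>+ z. ennreal (pw_density n w z) * indicator (A \<times> B) z \<partial>lborel)"
    unfolding density_measure_def using AB pw_meas by (simp add: emeasure_density)
  also have "\<dots> = (\<integral>\<^sup>+ z. (\<Sum>k1<n. \<Sum>k2<n. ennreal (v k2) * indicator ((A \<inter> X k1) \<times> (B \<inter> X k2)) z) \<partial>lborel)"
    by (simp only: pw)
  also have "\<dots> = (\<Sum>k1<n. \<Sum>k2<n. ennreal (v k2) * emeasure lborel ((A \<inter> X k1) \<times> (B \<inter> X k2)))"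
  proof -
    have m[measurable]: "(A \<inter> X k1) \<times> (B \<inter> X k2) \<in> sets (borel :: (real \<times> real) measure)" for k1 k2
      using Times_borel[of "A \<inter> X k1" "B \<inter> X k2"] A B by simp
    have "(\<integral>\<^sup>+ z. (\<Sum>k1<n. \<Sum>k2<n. ennreal (v k2) * indicator ((A \<inter> X k1) \<times> (B \<inter> X k2)) z) \<partial>lborel)
       = (\<Sum>k1<n. \<integral>\<^sup>+ z. (\<Sum>k2<n. ennreal (v k2) * indicator ((A \<inter> X k1) \<times> (B \<inter> X k2)) z) \<partial>lborel)"
      by (rule nn_integral_sum) measurable
    also have "\<dots> = (\<Sum>k1<n. \<Sum>k2<n. \<integral>\<^sup>+ z. ennreal (v k2) * indicator ((A \<inter> X k1) \<times> (B \<inter> X k2)) z \<partial>lborel)"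
      by (intro sum.cong refl nn_integral_sum) measurable
    also have "\<dots> = (\<Sum>k1<n. \<Sum>k2<n. ennreal (v k2) * emeasure lborel ((A \<inter> X k1) \<times> (B \<inter> X k2)))"
      by (intro sum.cong refl nn_integral_cmult_indicator) simp
    finally show ?thesis .
  qed
  also have "\<dots> = (\<Sum>k1<n. \<Sum>k2<n. emeasure lborel (A \<inter> X k1) * (ennreal (v k2) * emeasure lborel (B \<inter> X k2)))"
    using A B by (simp add: lborel2_Times mult.left_commute)
  also have "\<dots> = (\<Sum>k1<n. emeasure lborel (A \<inter> X k1)) * (\<Sum>k2<n. ennreal (v k2) * emeasure lborel (B \<inter> X k2))"
    by (simp only: sum_product)
  also have "(\<Sum>k1<n. emeasure lborel (A \<inter> X k1)) = emeasure lborel (A \<inter> {0..1})"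
    unfolding X_def by (rule grid_part[OF n A])
  finally show ?thesis unfolding X_def .
qed

definition tau :: "nat \<Rightarrow> real \<Rightarrow> real \<Rightarrow> real" where
  "tau M b a = (\<Sum>j<M. indicator {real j / M..<(real j + 1) / M} b * ((real j + zz j a) / M))"

definition Ij :: "nat \<Rightarrow> nat \<Rightarrow> real set" where
  "Ij M j = {real j / M..<(real j + 1) / M}"

lemma Ij_disj:
  assumes "0 < M" "b \<in> Ij M j" "b \<in> Ij M i" shows "i = j"
proof -
  have "real j < real i + 1" "real i < real j + 1" using assms
    by (auto simp: Ij_def divide_right_mono field_simps)
  then show ?thesis by linarith
qed

lemma Ij_sum:
  assumes M: "0 < M" and j: "j < M" and b: "b \<in> Ij M j"
  shows "(\<Sum>i<M. indicator (Ij M i) b * (f i :: real)) = f j"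
proof -
  have "(\<Sum>i<M. indicator (Ij M i) b * f i) = (\<Sum>i<M. if i = j then f i else 0)"
  proof (rule sum.cong[OF refl])
    fix i assume "i \<in> {..<M}"
    show "indicator (Ij M i) b * f i = (if i = j then f i else 0)"
    proof (cases "i = j")
      case True then show ?thesis using b by simp
    next
      case False
      then have "b \<notin> Ij M i" using Ij_disj[OF M b] by blast
      then show ?thesis using False by simp
    qed
  qed
  also have "\<dots> = f j" using j by simp
  finally show ?thesis .
qed

lemma Ij_exists:
  assumes M: "0 < M" and b: "0 \<le> b" "b < 1"
  shows "\<exists>j<M. b \<in> Ij M j"
proof -
  define j where "j = nat \<lfloor>b * M\<rfloor>"
  have "0 \<le> b * M" using b by simp
  then have jr: "real j \<le> b * M" "b * M < real j + 1" unfolding j_def by linarith+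
  have "b * M < M" using b M by simp
  then have "real j < M" using jr by linarith
  then have "j < M" by simp
  moreover have "real j / M \<le> b" "b < (real j + 1) / M" using jr M
    by (simp_all add: divide_le_eq less_divide_eq)
  then have "b \<in> Ij M j" by (simp add: Ij_def)
  ultimately show ?thesis by blast
qed

lemma Ij_sub: assumes "j < M" shows "Ij M j \<subseteq> {0..<1}"
proof
  fix b assume b: "b \<in> Ij M j"
  have M: "0 < real M" using assms by simp
  have "real j + 1 \<le> real M" using assms by linarith
  then have "(real j + 1) / M \<le> 1" using M by simp
  moreover have "0 \<le> real j / M" by simp
  moreover have "real j / M \<le> b" "b < (real j + 1) / M" using b by (simp_all add: Ij_def)
  ultimately have "0 \<le> b" "b < 1" by linarith+
  then show "b \<in> {0..<1}" by simp
qed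

lemma tau_eq: "0 < M \<Longrightarrow> j < M \<Longrightarrow> b \<in> Ij M j \<Longrightarrow> tau M b a = (real j + zz j a) / M"
  unfolding tau_def Ij_def[symmetric] by (rule Ij_sum)

lemma tau_meas[measurable]: "(\<lambda>z. tau M (fst z) (snd z)) \<in> borel_measurable (borel \<Otimes>\<^sub>M borel)"
  unfolding tau_def zz_def by measurable

lemma Kj:
  assumes M: "0 < M" and j: "j < M" and B: "B \<in> sets borel"
  shows "emeasure unif01 {a. (real j + zz j a) / M \<in> B}
       = ennreal M * emeasure lborel (B \<inter> {real j / M..(real j + 1) / M})"
proof -
  have Mr: "0 < real M" using M by simp
  have mb: "{a. (real j + zz j a) / M \<in> B} \<in> sets borel"
  proof -
    have "(\<lambda>a. (real j + zz j a) / M) \<in> borel_measurable borel" unfolding zz_def by measurable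
    from measurable_sets_borel[OF this B] show ?thesis by (simp add: vimage_def)
  qed
  obtain \<alpha> d where ad: "d \<noteq> 0" "\<bar>d\<bar> = 1 / M"
    and eq: "{a. (real j + zz j a) / M \<in> B} \<inter> {0..1} = {a. \<alpha> + d * a \<in> B \<inter> {real j / M..(real j + 1) / M}}"
  proof (cases "even j")
    case True
    show ?thesis
    proof (rule that[of "1 / M" "real j / M"])
      show "{a. (real j + zz j a) / M \<in> B} \<inter> {0..1} = {a. real j / M + 1 / M * a \<in> B \<inter> {real j / M..(real j + 1) / M}}"
      proof (intro set_eqI)
        fix a
        have e: "(real j + zz j a) / M = real j / M + 1 / M * a" using True by (simp add: zz_def add_divide_distrib)
        have r: "(real j / M \<le> real j / M + 1 / M * a \<and> real j / M + 1 / M * a \<le> (real j + 1) / M) \<longleftrightarrow> (0 \<le> a \<and> a \<le> 1)"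
          using Mr by (simp add: field_simps zero_le_mult_iff)
        show "a \<in> {a. (real j + zz j a) / M \<in> B} \<inter> {0..1} \<longleftrightarrow> a \<in> {a. real j / M + 1 / M * a \<in> B \<inter> {real j / M..(real j + 1) / M}}"
          using e r by auto
      qed
    qed (use Mr in auto)
  next
    case False
    show ?thesis
    proof (rule that[of "- 1 / M" "(real j + 1) / M"])
      show "{a. (real j + zz j a) / M \<in> B} \<inter> {0..1} = {a. (real j + 1) / M + - 1 / M * a \<in> B \<inter> {real j / M..(real j + 1) / M}}"
      proof (intro set_eqI)
        fix a
        have e: "(real j + zz j a) / M = (real j + 1) / M + - 1 / M * a" using False by (simp add: zz_def add_divide_distrib diff_divide_distrib)
        have mm: "0 < real M * real M" using Mr by simp
        have r: "(real j / M \<le> (real j + 1) / M + - 1 / M * a \<and> (real j + 1) / M + - 1 / M * a \<le> (real j + 1) / M) \<longleftrightarrow> (0 \<le> a \<and> a \<le> 1)"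
          using Mr by (simp add: field_simps zero_le_mult_iff) (smt (verit) mm)
        show "a \<in> {a. (real j + zz j a) / M \<in> B} \<inter> {0..1} \<longleftrightarrow> a \<in> {a. (real j + 1) / M + - 1 / M * a \<in> B \<inter> {real j / M..(real j + 1) / M}}"
          using e r by auto
      qed
    qed (use Mr in auto)
  qed
  have "emeasure unif01 {a. (real j + zz j a) / M \<in> B} = emeasure lborel {a. \<alpha> + d * a \<in> B \<inter> {real j / M..(real j + 1) / M}}"
    using mb by (simp add: U_emeasure eq)
  also have "\<dots> = ennreal (1 / \<bar>d\<bar>) * emeasure lborel (B \<inter> {real j / M..(real j + 1) / M})"
    using ad B by (intro L_aff) auto
  also have "1 / \<bar>d\<bar> = M" using ad Mr by simp
  finally show ?thesis .
qed

lemma Ij_sum_e: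
  assumes M: "0 < M" and j: "j < M" and b: "b \<in> Ij M j"
  shows "(\<Sum>i<M. indicator (Ij M i) b * (f i :: ennreal)) = f j"
proof -
  have "(\<Sum>i<M. indicator (Ij M i) b * f i) = (\<Sum>i<M. if i = j then f i else 0)"
  proof (rule sum.cong[OF refl])
    fix i assume "i \<in> {..<M}"
    show "indicator (Ij M i) b * f i = (if i = j then f i else 0)"
    proof (cases "i = j")
      case True then show ?thesis using b by simp
    next
      case False
      then have "b \<notin> Ij M i" using Ij_disj[OF M b] by blast
      then show ?thesis using False by simp
    qed
  qed
  also have "\<dots> = f j" using j by simp
  finally show ?thesis .
qed

lemma Ij_meas[measurable]: "Ij M j \<in> sets borel" by (simp add: Ij_def)

lemma Ij_measure: "0 < M \<Longrightarrow> emeasure lborel (Ij M j) = ennreal (1 / M)"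
  by (simp add: Ij_def divide_right_mono add_divide_distrib)

lemma sets_S: "sets (unif01 \<Otimes>\<^sub>M unif01) = sets (borel \<Otimes>\<^sub>M borel)"
  by (rule sets_pair_measure_cong) simp_all

lemma space_S: "space (unif01 \<Otimes>\<^sub>M unif01) = UNIV"
  by (simp add: space_pair_measure)

lemma meas_S: "f \<in> measurable (borel \<Otimes>\<^sub>M borel) N \<Longrightarrow> f \<in> measurable (unif01 \<Otimes>\<^sub>M unif01) N"
  by (subst measurable_cong_sets[OF sets_S refl])

lemma tau_distr:
  assumes M: "0 < M"
  shows "distr (unif01 \<Otimes>\<^sub>M unif01) borel (\<lambda>z. tau M (fst z) (snd z)) = unif01"
proof (rule measure_eqI)
  interpret U: sigma_finite_measure unif01 by (rule U_sf)
  let ?S = "unif01 \<Otimes>\<^sub>M unif01"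
  let ?t = "\<lambda>z. tau M (fst z) (snd z)"
  have tm: "?t \<in> borel_measurable ?S" by (rule meas_S) (rule tau_meas)
  show "sets (distr ?S borel ?t) = sets unif01" by simp
  fix B assume "B \<in> sets (distr ?S borel ?t)"
  then have B[measurable]: "B \<in> sets borel" by simp
  define X where "X = ?t -` B \<inter> space ?S"
  have X: "X \<in> sets ?S" unfolding X_def using tm B by (rule measurable_sets)
  define g where "g b = emeasure unif01 (Pair b -` X)" for b
  have gm: "g \<in> borel_measurable borel"
    using U.measurable_emeasure_Pair[OF X] unfolding g_def
    by (subst (asm) measurable_cong_sets[OF sets_U refl])
  define K where "K j = ennreal M * emeasure lborel (B \<inter> {real j / M..(real j + 1) / M})" for j
  have pt: "g b * indicator {0..<1} b = (\<Sum>j<M. indicator (Ij M j) b * K j)" for b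
  proof (cases "b \<in> {0..<1}")
    case True
    then obtain j where j: "j < M" "b \<in> Ij M j" using Ij_exists[OF M, of b] by auto
    have "Pair b -` X = {a. (real j + zz j a) / M \<in> B}"
      unfolding X_def space_S using tau_eq[OF M j(1) j(2)] by auto
    then have "g b = K j" unfolding g_def K_def using Kj[OF M j(1) B] by simp
    then show ?thesis using True Ij_sum_e[OF M j(1) j(2), of K] by simp
  next
    case False
    then have "b \<notin> Ij M j" if "j < M" for j using Ij_sub[OF that] by blast
    then show ?thesis using False by (simp add: indicator_def)
  qed
  have "emeasure (distr ?S borel ?t) B = emeasure ?S X"
    unfolding X_def using tm B by (rule emeasure_distr)
  also have "\<dots> = (\<integral>\<^sup>+ b. g b \<partial>unif01)"
    unfolding g_def using X by (rule U.emeasure_pair_measure_alt)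
  also have "\<dots> = (\<integral>\<^sup>+ b. g b * indicator {0..<1} b \<partial>lborel)"
    using gm by (rule U_nn)
  also have "\<dots> = (\<integral>\<^sup>+ b. (\<Sum>j<M. K j * indicator (Ij M j) b) \<partial>lborel)"
    unfolding pt by (simp add: mult.commute)
  also have "\<dots> = (\<Sum>j<M. K j * emeasure lborel (Ij M j))"
    by (subst nn_integral_sum) (simp_all add: nn_integral_cmult_indicator)
  also have "\<dots> = (\<Sum>j<M. emeasure lborel (B \<inter> {real j / M..(real j + 1) / M}))"
  proof (intro sum.cong refl)
    fix j
    have "ennreal M * ennreal (1 / M) = 1" using M by (simp add: ennreal_mult[symmetric])
    moreover have "K j * emeasure lborel (Ij M j) = emeasure lborel (B \<inter> {real j / M..(real j + 1) / M}) * (ennreal M * ennreal (1 / M))"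
      unfolding K_def Ij_measure[OF M] by (simp only: ac_simps)
    ultimately show "K j * emeasure lborel (Ij M j) = emeasure lborel (B \<inter> {real j / M..(real j + 1) / M})"
      by simp
  qed
  also have "\<dots> = emeasure lborel (B \<inter> {0..1})"
    using M by (intro grid_part) auto
  also have "\<dots> = emeasure unif01 B" using B by (simp add: U_emeasure)
  finally show "emeasure (distr ?S borel ?t) B = emeasure unif01 B" .
qed

context gsetup begin

lemma snd_marg:
  assumes cn: "c n = 1" and wv: "\<And>k1 k2. k1 < n \<Longrightarrow> k2 < n \<Longrightarrow> w k1 k2 = v k2"
  shows "distr (unif01 \<Otimes>\<^sub>M unif01) borel (\<lambda>z. (snd z, Gf n v c (fst z))) = density_measure (pw_density n w)"
proof -
  let ?G = "Gf n v c"
  let ?N = "distr unif01 borel ?G"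
  let ?S = "unif01 \<Otimes>\<^sub>M unif01"
  let ?T = "\<lambda>z. (snd z, Gf n v c (fst z))"
  interpret U: finite_measure unif01 by (rule U_finite)
  have GmU: "?G \<in> measurable unif01 borel" by (rule meas_U) (rule Gf_meas)
  interpret N: finite_measure ?N by (rule U.finite_measure_distr[OF GmU])
  have Tm: "?T \<in> borel_measurable ?S" by (rule meas_S) measurable
  have setsP: "sets (unif01 \<Otimes>\<^sub>M ?N) = sets (borel :: (real \<times> real) measure)"
  proof -
    have "sets (unif01 \<Otimes>\<^sub>M ?N) = sets (borel \<Otimes>\<^sub>M (borel :: real measure))"
      by (rule sets_pair_measure_cong) simp_all
    then show ?thesis by (simp only: borel_prod)
  qed
  have eq1: "unif01 \<Otimes>\<^sub>M ?N = density_measure (pw_density n w)"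
  proof (rule pair_measure_eqI)
    show "sigma_finite_measure unif01" by unfold_locales
    show "sigma_finite_measure ?N" by unfold_locales
    show "sets (unif01 \<Otimes>\<^sub>M ?N) = sets (density_measure (pw_density n w))"
      unfolding setsP by (simp add: density_measure_def)
    fix A B assume A: "A \<in> sets unif01" and B: "B \<in> sets ?N"
    then have A': "A \<in> sets borel" and B': "B \<in> sets borel" by auto
    show "emeasure unif01 A * emeasure ?N B = emeasure (density_measure (pw_density n w)) (A \<times> B)"
      using mu_rect[OF n1 vpos wv A' B'] G_distr[OF cn B'] U_emeasure[OF A'] by simp
  qed
  have eq2: "unif01 \<Otimes>\<^sub>M ?N = distr ?S borel ?T"
  proof (rule pair_measure_eqI)
    show "sigma_finite_measure unif01" by unfold_locales
    show "sigma_finite_measure ?N" by unfold_locales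
    show "sets (unif01 \<Otimes>\<^sub>M ?N) = sets (distr ?S borel ?T)"
      unfolding setsP by simp
    fix A B assume A: "A \<in> sets unif01" and B: "B \<in> sets ?N"
    then have A': "A \<in> sets borel" and B': "B \<in> sets borel" by auto
    have GB: "?G -` B \<in> sets unif01" using measurable_sets_borel[OF Gf_meas B'] by simp
    have "emeasure (distr ?S borel ?T) (A \<times> B) = emeasure ?S (?T -` (A \<times> B) \<inter> space ?S)"
      using Tm Times_borel[OF A' B'] by (rule emeasure_distr)
    also have "?T -` (A \<times> B) \<inter> space ?S = (?G -` B) \<times> A" by (auto simp: space_S)
    also have "emeasure ?S ((?G -` B) \<times> A) = emeasure unif01 (?G -` B) * emeasure unif01 A"
      using GB A by (rule U.emeasure_pair_measure_Times)
    also have "emeasure unif01 (?G -` B) = emeasure ?N B"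
      using GmU B' by (simp add: emeasure_distr)
    finally show "emeasure unif01 A * emeasure ?N B = emeasure (distr ?S borel ?T) (A \<times> B)"
      by (simp add: mult.commute)
  qed
  show ?thesis using eq1 eq2 by simp
qed

end

lemma tent_meas[measurable]: "tent \<in> borel_measurable borel"
  unfolding tent_def by measurable

lemma tent_pow_meas[measurable]: "(tent ^^ m) \<in> borel_measurable borel"
  by (induction m) (simp_all add: measurable_comp[OF _ tent_meas, unfolded comp_def] o_def)

lemma fst_borel: "fst \<in> measurable (borel :: (('a::second_countable_topology) \<times> ('b::second_countable_topology)) measure) borel"
proof -
  have "fst \<in> measurable (borel \<Otimes>\<^sub>M borel :: ('a \<times> 'b) measure) borel" by (rule measurable_fst)
  then show ?thesis by (simp only: borel_prod)
qed

lemma snd_borel: "snd \<in> measurable (borel :: (('a::second_countable_topology) \<times> ('b::second_countable_topology)) measure) borel"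
proof -
  have "snd \<in> measurable (borel \<Otimes>\<^sub>M borel :: ('a \<times> 'b) measure) borel" by (rule measurable_snd)
  then show ?thesis by (simp only: borel_prod)
qed

context gsetup begin

lemma err_bound:
  fixes s :: nat
  assumes cn: "c n = 1"
  defines "M \<equiv> (2::nat) ^ (s + 2)"
  defines "Phi \<equiv> \<lambda>t. ((tent ^^ (s + 2)) t, Gf n v c t)"
  defines "F \<equiv> \<lambda>z. (Phi (tau M (fst z) (snd z)), (snd z, Gf n v c (fst z)))"
  shows "(\<integral>\<^sup>+ z. ennreal (dist (fst z) (snd z)) \<partial>(distr (unif01 \<Otimes>\<^sub>M unif01) borel F)) \<le> ennreal (1 / M)"
proof -
  interpret U: finite_measure unif01 by (rule U_finite)
  let ?S = "unif01 \<Otimes>\<^sub>M unif01"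
  let ?G = "Gf n v c"
  have M: "0 < M" by (simp add: M_def)
  have Mr: "real M = 2 ^ (s + 2)" by (simp add: M_def)
  have Phim[measurable]: "Phi \<in> borel_measurable borel" unfolding Phi_def by measurable
  have Fm0: "F \<in> borel_measurable (borel \<Otimes>\<^sub>M borel)" unfolding F_def by measurable
  have Fm: "F \<in> borel_measurable ?S" by (rule meas_S) (rule Fm0)
  define D where "D b a = ennreal (dist (Phi (tau M b a)) (a, ?G b))" for b a
  have Dm0: "(\<lambda>z. D (fst z) (snd z)) \<in> borel_measurable (borel \<Otimes>\<^sub>M borel)"
    unfolding D_def by measurable
  have Dm: "(\<lambda>z. D (fst z) (snd z)) \<in> borel_measurable ?S" by (rule meas_S) (rule Dm0)
  have Dm': "(\<lambda>(b, a). D b a) \<in> borel_measurable ?S" using Dm by (simp add: case_prod_beta')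
  define I where "I b = (\<integral>\<^sup>+ a. D b a \<partial>unif01)" for b
  have Im: "I \<in> borel_measurable borel"
  proof -
    have "I \<in> borel_measurable unif01" unfolding I_def using U.borel_measurable_nn_integral[OF Dm'] .
    then show ?thesis by (subst (asm) measurable_cong_sets[OF sets_U refl])
  qed
  define dG where "dG j = ?G ((real j + 1) / M) - ?G (real j / M)" for j
  have dG0: "0 \<le> dG j" for j unfolding dG_def by (intro diff_ge_0_iff_ge[THEN iffD2] G_mono) (simp add: divide_right_mono)
  have pt: "I b * indicator {0..<1} b \<le> (\<Sum>j<M. ennreal (dG j) * indicator (Ij M j) b)" for b
  proof (cases "b \<in> {0..<1}")
    case True
    then obtain j where j: "j < M" "b \<in> Ij M j" using Ij_exists[OF M, of b] by auto
    have bj: "real j / M \<le> b" "b \<le> (real j + 1) / M" using j(2) by (auto simp: Ij_def)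
    have Da: "D b a * indicator {0..<1} a \<le> ennreal (dG j) * indicator {0..<1} a" for a
    proof (cases "a \<in> {0..<1}")
      case True
      have a01: "0 \<le> a" "a \<le> 1" using True by auto
      have z01: "0 \<le> zz j a" "zz j a \<le> 1" using a01 by (auto simp: zz_def)
      let ?t = "(real j + zz j a) / M"
      have te: "tau M b a = ?t" by (rule tau_eq[OF M j])
      have jM: "j < 2 ^ (s + 2)" using j(1) by (simp add: M_def)
      have "(tent ^^ (s + 2)) ?t = a" using tent_iter[OF jM a01] by (simp add: Mr)
      then have "Phi (tau M b a) = (a, ?G ?t)" by (simp add: Phi_def te)
      then have dd: "dist (Phi (tau M b a)) (a, ?G b) = \<bar>?G ?t - ?G b\<bar>"
        by (simp add: dist_Pair_Pair dist_real_def)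
      have tj: "real j / M \<le> ?t" "?t \<le> (real j + 1) / M" using z01 M
        by (simp_all add: divide_right_mono)
      have "?G (real j / M) \<le> ?G ?t" "?G ?t \<le> ?G ((real j + 1) / M)"
        "?G (real j / M) \<le> ?G b" "?G b \<le> ?G ((real j + 1) / M)"
        using tj bj by (simp_all add: G_mono)
      then have "\<bar>?G ?t - ?G b\<bar> \<le> dG j" unfolding dG_def by linarith
      then have "D b a \<le> ennreal (dG j)" unfolding D_def dd by (simp add: ennreal_leI)
      then show ?thesis using True by simp
    next
      case False then show ?thesis by simp
    qed
    have "I b = (\<integral>\<^sup>+ a. D b a * indicator {0..<1} a \<partial>lborel)"
      unfolding I_def
    proof (rule U_nn)
      show "D b \<in> borel_measurable borel"
        using measurable_Pair2[OF Dm0, of b] by simp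
    qed
    also have "\<dots> \<le> (\<integral>\<^sup>+ a. ennreal (dG j) * indicator {0..<1::real} a \<partial>lborel)"
      by (rule nn_integral_mono) (rule Da)
    also have "\<dots> = ennreal (dG j)" by (simp add: nn_integral_cmult_indicator)
    also have "ennreal (dG j) = (\<Sum>i<M. ennreal (dG i) * indicator (Ij M i) b)"
      using Ij_sum_e[OF M j, of "\<lambda>i. ennreal (dG i)"] by (simp add: mult.commute)
    finally show ?thesis using True by simp
  next
    case False then show ?thesis by simp
  qed
  have dm0: "(\<lambda>z::((real \<times> real) \<times> (real \<times> real)). dist (fst z) (snd z)) \<in> borel_measurable borel"
    by (intro borel_measurable_continuous_onI continuous_intros)
  have dm: "(\<lambda>z::((real \<times> real) \<times> (real \<times> real)). ennreal (dist (fst z) (snd z))) \<in> borel_measurable borel"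
    using dm0 by measurable
  have "(\<integral>\<^sup>+ z. ennreal (dist (fst z) (snd z)) \<partial>(distr ?S borel F))
      = (\<integral>\<^sup>+ z. ennreal (dist (fst (F z)) (snd (F z))) \<partial>?S)"
    using Fm by (rule nn_integral_distr) (simp add: dm)
  also have "\<dots> = (\<integral>\<^sup>+ z. D (fst z) (snd z) \<partial>?S)"
    by (simp add: F_def D_def)
  also have "\<dots> = (\<integral>\<^sup>+ b. I b \<partial>unif01)"
    unfolding I_def using U.nn_integral_fst[OF Dm'] by (simp add: case_prod_beta')
  also have "\<dots> = (\<integral>\<^sup>+ b. I b * indicator {0..<1} b \<partial>lborel)"
    using Im by (rule U_nn)
  also have "\<dots> \<le> (\<integral>\<^sup>+ b. (\<Sum>j<M. ennreal (dG j) * indicator (Ij M j) b) \<partial>lborel)"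
    by (intro nn_integral_mono pt)
  also have "\<dots> = (\<Sum>j<M. ennreal (dG j) * emeasure lborel (Ij M j))"
    by (subst nn_integral_sum) (simp_all add: nn_integral_cmult_indicator)
  also have "\<dots> = (\<Sum>j<M. ennreal (dG j * (1 / M)))"
  proof (intro sum.cong refl)
    fix j
    show "ennreal (dG j) * emeasure lborel (Ij M j) = ennreal (dG j * (1 / M))"
      unfolding Ij_measure[OF M] using dG0[of j] by (rule ennreal_mult[symmetric]) simp
  qed
  also have "\<dots> = ennreal (\<Sum>j<M. dG j * (1 / M))"
    by (rule sum_ennreal) (simp add: dG0)
  also have "(\<Sum>j<M. dG j * (1 / M)) = (\<Sum>j<M. dG j) * (1 / M)"
    by (rule sum_distrib_right[symmetric])
  also have "(\<Sum>j<M. dG j) = ?G (real M / M) - ?G (real 0 / M)"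
    unfolding dG_def using sum_lessThan_telescope[of "\<lambda>j. ?G (real j / M)" M] by (simp add: add.commute)
  also have "\<dots> = 1" using M G0 G1[OF cn] by simp
  finally show ?thesis by simp
qed

end

theorem mainTheorem7:
  fixes n s :: nat and w :: "nat \<Rightarrow> nat \<Rightarrow> real"
  assumes "n \<ge> 1" and "s \<ge> 1"
    and "E2_weights n w"
    and "\<forall>k1<n. \<forall>k2<n. w k1 k2 = w 0 k2"
  shows "\<exists>\<Phi>. is_relu_net 1 2 \<Phi> \<and> net_connectivity \<Phi> \<le> 6 * n + 24 * s + 2
           \<and> net_depth \<Phi> = s + 3
           \<and> wasserstein1 (pushforward (net_fun_1_2 \<Phi>) unif01) (density_measure (pw_density n w))
               \<le> ennreal (2 * sqrt 2 / 2 ^ s)"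
proof -
  note n1 = assms(1) and s1 = assms(2)
  have wpos: "\<And>k1 k2. k1 < n \<Longrightarrow> k2 < n \<Longrightarrow> 0 < w k1 k2" and wsum: "(\<Sum>k1<n. \<Sum>k2<n. w k1 k2) = real n ^ 2"
    using assms(3) by (auto simp: E2_weights_def)
  define v where "v k = (if k < n then w 0 k else 1)" for k
  define c where "c k = (\<Sum>i<k. v i) / n" for k
  have vpos: "0 < v k" for k using wpos[of 0 k] n1 by (auto simp: v_def)
  have wv: "w k1 k2 = v k2" if "k1 < n" "k2 < n" for k1 k2
  proof -
    have "w k1 k2 = w 0 k2" using assms(4) that by blast
    then show ?thesis using that by (simp add: v_def)
  qed
  interpret gsetup n v c
  proof
    show "1 \<le> n" by (rule n1)
    show "0 < v k" for k by (rule vpos)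
    show "c (Suc k) = c k + v k / n" for k by (simp add: c_def add_divide_distrib)
    show "c 0 = 0" by (simp add: c_def)
  qed
  have cn: "c n = 1"
  proof -
    have "(\<Sum>k1<n. \<Sum>k2<n. w k1 k2) = (\<Sum>k1<n. \<Sum>k2<n. v k2)" using wv by (intro sum.cong refl) auto
    also have "\<dots> = real n * (\<Sum>k2<n. v k2)" by simp
    finally have e1: "(\<Sum>k1<n. \<Sum>k2<n. w k1 k2) = real n * (\<Sum>k2<n. v k2)" .
    have "real n * (\<Sum>k2<n. v k2) = real n * real n" using e1 wsum unfolding power2_eq_square by linarith
    moreover have "real n \<noteq> 0" using n1 by simp
    ultimately have "(\<Sum>k2<n. v k2) = real n" by (metis mult_left_cancel)
    then show ?thesis using n1 by (simp add: c_def)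
  qed
  define M where "M = (2::nat) ^ (s + 2)"
  define Phi where "Phi = (\<lambda>t. ((tent ^^ (s + 2)) t, Gf n v c t))"
  define F where "F = (\<lambda>z. (Phi (tau M (fst z) (snd z)), (snd z, Gf n v c (fst z))))"
  let ?S = "unif01 \<Otimes>\<^sub>M unif01"
  let ?N = "Net n s v c"
  let ?mu = "density_measure (pw_density n w)"
  define pi where "pi = distr ?S borel F"
  have M: "0 < M" by (simp add: M_def)
  have nf: "net_fun_1_2 ?N = Phi"
    by (rule ext) (simp add: net_fun[where c=c and v=v, OF cle vpos] Phi_def)
  have Phim[measurable]: "Phi \<in> borel_measurable borel" unfolding Phi_def by measurable
  have Fm: "F \<in> borel_measurable ?S" by (rule meas_S) (unfold F_def, measurable)
  have tm: "(\<lambda>z. tau M (fst z) (snd z)) \<in> borel_measurable ?S" by (rule meas_S) (rule tau_meas)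
  have coup: "pi \<in> couplings (pushforward (net_fun_1_2 ?N) unif01) ?mu"
    unfolding couplings_def
  proof (intro CollectI conjI)
    show "sets pi = sets (borel \<Otimes>\<^sub>M borel)" unfolding pi_def borel_prod by simp
    have "distr pi borel fst = distr ?S borel (fst \<circ> F)"
      unfolding pi_def by (rule distr_distr[OF fst_borel Fm])
    also have "fst \<circ> F = Phi \<circ> (\<lambda>z. tau M (fst z) (snd z))" by (simp add: F_def o_def)
    also have "distr ?S borel (Phi \<circ> (\<lambda>z. tau M (fst z) (snd z)))
        = distr (distr ?S borel (\<lambda>z. tau M (fst z) (snd z))) borel Phi"
      by (rule distr_distr[OF Phim tm, symmetric])
    also have "\<dots> = distr unif01 borel Phi" by (simp add: tau_distr[OF M])
    finally show "distr pi borel fst = pushforward (net_fun_1_2 ?N) unif01"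
      by (simp add: pushforward_def nf)
    have "distr pi borel snd = distr ?S borel (snd \<circ> F)"
      unfolding pi_def by (rule distr_distr[OF snd_borel Fm])
    also have "snd \<circ> F = (\<lambda>z. (snd z, Gf n v c (fst z)))" by (simp add: F_def o_def)
    also have "distr ?S borel (\<lambda>z. (snd z, Gf n v c (fst z))) = ?mu"
      by (rule snd_marg[OF cn wv])
    finally show "distr pi borel snd = ?mu" .
  qed
  have "wasserstein1 (pushforward (net_fun_1_2 ?N) unif01) ?mu
      \<le> (\<integral>\<^sup>+ z. ennreal (dist (fst z) (snd z)) \<partial>pi)"
    unfolding wasserstein1_def by (rule INF_lower[OF coup])
  also have "\<dots> \<le> ennreal (1 / M)"
    unfolding pi_def F_def Phi_def M_def by (rule err_bound[OF cn])
  also have "\<dots> \<le> ennreal (2 * sqrt 2 / 2 ^ s)"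
  proof (rule ennreal_leI)
    have "1 \<le> sqrt 2" by simp
    then have "1 / 4 \<le> 2 * sqrt 2" by linarith
    then have "(1 / 4) / 2 ^ s \<le> 2 * sqrt 2 / 2 ^ s" by (rule divide_right_mono) simp
    moreover have "1 / real M = (1 / 4) / 2 ^ s" by (simp add: M_def power_add)
    ultimately show "1 / real M \<le> 2 * sqrt 2 / 2 ^ s" by simp
  qed
  finally have W: "wasserstein1 (pushforward (net_fun_1_2 ?N) unif01) ?mu \<le> ennreal (2 * sqrt 2 / 2 ^ s)" .
  show ?thesis
    using Net_relu[of n s v c] Net_conn[OF s1, of n v c] Net_depth[of n s v c] W by blast
qed

end
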